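(* Let $X$ be a random variable having finite CIGF $G_X(\alpha,\beta)$ for $(\alpha,\beta)\in D_X$, and let $\nu>0$, $\nu\notin\mathbb{N}$. If $(0,1)\in D_X$, then $$\mathcal{CRE}_\nu(X)=\frac{1}{\Gamma(\nu+1)}\left({}^{C}D^{\nu}_{-,\beta}G_X\right)(\alpha,\beta)\Big|_{\alpha=0,\beta=1}.$$ If $(1,0)\in D_X$, then $$\mathcal{CE}_\nu(X)=\frac{1}{\Gamma(\nu+1)}\left({}^{C}D^{\nu}_{-,\alpha}G_X\right)(\alpha,\beta)\Big|_{\alpha=1,\beta=0}.$$
   Context: For a random variable $X$ with CDF $F$ and survival function $\overline F=1-F$, let $l=\inf\{x:F(x)>0\}$, $r=\sup\{x:\overline F(x)>0\}$. The CIGF of $X$ is $G_X(\alpha,\beta)=\int_l^r [F(x)]^\alpha[\overline F(x)]^\beta\,dx$ on $D_X=\{(\alpha,\beta)\in\mathbb{R}^2: G_X(\alpha,\beta)<\infty\}$. The generalized fractional cumulative residual entropy is $\mathcal{CRE}_\nu(X)=\frac{1}{\Gamma(\nu+1)}\int_l^r\overline F(x)[-\log\overline F(x)]^\nu\,dx$ and the generalized fractional cumulative entropy is $\mathcal{CE}_\nu(X)=\frac{1}{\Gamma(\nu+1)}\int_l^r F(x)[-\log F(x)]^\nu\,dx$. For a function $y(x_1,x_2)$ and $\nu>0$, $\nu\notin\mathbb{N}$, with $n=\lfloor\nu\rfloor+1$, the left-sided Caputo partial fractional derivative with respect to $x_1$ of order $\nu$ is $\left({}^{C}D^\nu_{-,x_1}y\right)(x_1,x_2)=\frac{(-1)^n}{\Gamma(n-\nu)}\int_{x_1}^{+\infty}\frac{\partial_t^n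 y(t,x_2)}{(t-x_1)^{\nu+1-n}}\,dt$; the derivative with respect to $x_2$ is defined analogously. *)

theory Defs
  imports "HOL-Probability.Probability"
begin

text \<open>All notions are stated for a distribution function F (the CDF of X);
  survival function is 1 - F. Endpoints l, r are extended reals.\<close>

definition lend :: "(real \<Rightarrow> real) \<Rightarrow> ereal" where
  "lend F = Inf {ereal x | x. F x > 0}"

definition rend :: "(real \<Rightarrow> real) \<Rightarrow> ereal" where
  "rend F = Sup {ereal x | x. 1 - F x > 0}"

definition cigf_integrand :: "(real \<Rightarrow> real) \<Rightarrow> real \<Rightarrow> real \<Rightarrow> real \<Rightarrow> real" where
  "cigf_integrand F a b x = (F x) powr a * (1 - F x) powr b"

definition CIGF :: "(real \<Rightarrow> real) \<Rightarrow> real \<Rightarrow> real \<Rightarrow> real" where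
  "CIGF F a b = (LBINT x = lend F..rend F. cigf_integrand F a b x)"

definition CIGF_dom :: "(real \<Rightarrow> real) \<Rightarrow> (real \<times> real) set" where
  "CIGF_dom F = {(a, b). interval_lebesgue_integrable lborel (lend F) (rend F) (cigf_integrand F a b)}"

definition CRE_frac :: "(real \<Rightarrow> real) \<Rightarrow> real \<Rightarrow> real" where
  "CRE_frac F \<nu> = 1 / Gamma (\<nu> + 1) *
     (LBINT x = lend F..rend F. (1 - F x) * (- ln (1 - F x)) powr \<nu>)"

definition CE_frac :: "(real \<Rightarrow> real) \<Rightarrow> real \<Rightarrow> real" where
  "CE_frac F \<nu> = 1 / Gamma (\<nu> + 1) *
     (LBINT x = lend F..rend F. F x * (- ln (F x)) powr \<nu>)"

definition caputo_minus :: "real \<Rightarrow> (real \<Rightarrow> real) \<Rightarrow> real \<Rightarrow> real" where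
  "caputo_minus \<nu> g x =
     (let n = nat \<lfloor>\<nu>\<rfloor> + 1 in
       (-1) ^ n / Gamma (real n - \<nu>) *
       (LBINT t = ereal x..PInfty. (deriv ^^ n) g t / (t - x) powr (\<nu> + 1 - real n)))"

definition caputo_minus_x1 :: "real \<Rightarrow> (real \<Rightarrow> real \<Rightarrow> real) \<Rightarrow> real \<Rightarrow> real \<Rightarrow> real" where
  "caputo_minus_x1 \<nu> y x1 x2 = caputo_minus \<nu> (\<lambda>t. y t x2) x1"

definition caputo_minus_x2 :: "real \<Rightarrow> (real \<Rightarrow> real \<Rightarrow> real) \<Rightarrow> real \<Rightarrow> real \<Rightarrow> real" where
  "caputo_minus_x2 \<nu> y x1 x2 = caputo_minus \<nu> (\<lambda>t. y x1 t) x2"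

end

theory Submission
  imports Defs
begin

lemma exp_ge_pow:
  fixes x :: real assumes "0 \<le> x" shows "x ^ n / fact n \<le> exp x"
proof -
  have s: "(\<lambda>n. x^n /\<^sub>R fact n) sums exp x" by (rule exp_converges)
  have "(\<Sum>i\<in>{n}. x^i /\<^sub>R fact i) \<le> (\<Sum>i. x^i /\<^sub>R fact i)"
    by (rule sum_le_suminf) (use s assms in \<open>auto simp: sums_iff\<close>)
  then show ?thesis using s by (simp add: sums_iff divide_inverse mult.commute)
qed

lemma pow_ln_bound:
  fixes v d :: real assumes "0 < v" "v \<le> 1" "0 < d"
  shows "\<bar>ln v\<bar> ^ j * v powr d \<le> fact j / d ^ j"
proof -
  define y where "y = - ln v"
  have y0: "0 \<le> y" using assms by (simp add: y_def)
  have a: "\<bar>ln v\<bar> = y" using y0 by (simp add: y_def)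
  have b: "v powr d = inverse (exp (d * y))" using assms
    by (simp add: powr_def y_def exp_minus[symmetric])
  have "(d*y) ^ j / fact j \<le> exp (d*y)" using y0 assms by (intro exp_ge_pow) simp
  then have "d^j * y^j \<le> fact j * exp (d*y)"
    by (simp add: divide_simps power_mult_distrib mult.commute)
  then have "y^j \<le> fact j / d^j * exp (d*y)" using assms
    by (simp add: field_simps)
  then show ?thesis unfolding a b by (simp add: divide_simps)
qed

lemma powr_diff_bound:
  fixes v a b :: real assumes "0 < v" "v \<le> 1"
  shows "\<bar>v powr a - v powr b\<bar> \<le> \<bar>a - b\<bar> * \<bar>ln v\<bar> * v powr (min a b)"
proof -
  have key: "v powr q - v powr p \<le> (p - q) * \<bar>ln v\<bar> * v powr q" if "q \<le> p" for p q
  proof -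
    have "v powr p = v powr q * exp ((p - q) * ln v)" using assms
      by (simp add: powr_def exp_add[symmetric] algebra_simps)
    moreover have "1 + (p - q) * ln v \<le> exp ((p - q) * ln v)" by (rule exp_ge_add_one_self)
    moreover have "\<bar>ln v\<bar> = - ln v" using assms by simp
    moreover have "0 \<le> v powr q" by simp
    ultimately have "v powr q * (1 + (p - q) * ln v) \<le> v powr p"
      by (metis mult_left_mono)
    then have "v powr q - v powr p \<le> v powr q * (- (p - q) * ln v)"
      by (simp add: algebra_simps)
    then show ?thesis using \<open>\<bar>ln v\<bar> = - ln v\<close> by (simp add: algebra_simps)
  qed
  have mono: "v powr p \<le> v powr q" if "q \<le> p" for p q
    using assms that by (simp add: powr_mono')
  show ?thesis
  proof (cases "b \<le> a")
    case True
    then show ?thesis using key[OF True] mono[OF True] by (simp add: min_def)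
  next
    case False
    then show ?thesis using key[of a b] mono[of a b] by (simp add: min_def abs_minus_commute)
  qed
qed


definition HH :: "real set \<Rightarrow> (real \<Rightarrow> real) \<Rightarrow> nat \<Rightarrow> real \<Rightarrow> real" where
  "HH S u k t = (LBINT x:S. u x powr t * ln (u x) ^ k)"

lemma integrand_bound:
  fixes v t :: real assumes "0 < v" "v \<le> 1" "1 + d \<le> t" "0 < d"
  shows "\<bar>v powr t * ln v ^ k\<bar> \<le> fact k / d ^ k * v"
proof -
  have "\<bar>v powr t * ln v ^ k\<bar> = v * (\<bar>ln v\<bar> ^ k * v powr (t - 1))"
    using assms by (simp add: abs_mult power_abs powr_diff)
  also have "\<dots> \<le> v * (\<bar>ln v\<bar> ^ k * v powr d)"
    using assms by (intro mult_left_mono powr_mono') auto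
  also have "\<dots> \<le> v * (fact k / d ^ k)"
    using assms by (intro mult_left_mono pow_ln_bound) auto
  finally show ?thesis by (simp add: mult.commute)
qed

context
  fixes S :: "real set" and u :: "real \<Rightarrow> real"
  assumes S[measurable]: "S \<in> sets lborel"
    and u[measurable]: "u \<in> borel_measurable lborel"
    and upos: "\<And>x. x \<in> S \<Longrightarrow> 0 < u x \<and> u x < 1"
    and uint: "set_integrable lborel S u"
begin

lemma integrable_pow:
  assumes "1 < t"
  shows "set_integrable lborel S (\<lambda>x. u x powr t * ln (u x) ^ k)"
proof (rule set_integrable_bound[where f="\<lambda>x. fact k / (t-1) ^ k * u x"])
  show "set_integrable lborel S (\<lambda>x. fact k / (t-1) ^ k * u x)"
    using uint by simp
  show "set_borel_measurable lborel S (\<lambda>x. u x powr t * ln (u x) ^ k)"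
    unfolding set_borel_measurable_def by measurable
  show "AE x in lborel. x \<in> S \<longrightarrow> norm (u x powr t * ln (u x) ^ k) \<le> norm (fact k / (t-1) ^ k * u x)"
  proof (rule AE_I2, intro impI)
    fix x assume "x \<in> S"
    then have "\<bar>u x powr t * ln (u x) ^ k\<bar> \<le> fact k / (t-1) ^ k * u x"
      using upos[of x] assms by (intro integrand_bound) auto
    then show "norm (u x powr t * ln (u x) ^ k) \<le> norm (fact k / (t-1) ^ k * u x)"
      using upos[of x] assms \<open>x \<in> S\<close> by auto
  qed
qed

lemma pointwise_deriv:
  assumes "0 < v"
  shows "((\<lambda>s. v powr s * ln v ^ k) has_real_derivative v powr t * ln v ^ Suc k) (at t)"
  using assms by (auto intro!: derivative_eq_intros simp: algebra_simps)

lemma HH_deriv: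
  assumes "1 < t"
  shows "(HH S u k has_real_derivative HH S u (Suc k) t) (at t)"
proof -
  define d where "d = (t - 1) / 2"
  have d0: "0 < d" using assms by (simp add: d_def)
  define T where "T = {1 + d<..}"
  have tT: "t \<in> T" "open T" using assms by (auto simp: T_def d_def field_simps)
  define C where "C = fact (Suc k) / d ^ Suc k"
  have "(HH S u k has_real_derivative HH S u (Suc k) t) (at t within T)"
    unfolding has_field_derivative_iff tendsto_at_iff_sequentially
  proof (intro allI impI)
    fix X :: "nat \<Rightarrow> real" assume XT: "\<forall>i. X i \<in> T - {t}" and Xt: "X \<longlonglongrightarrow> t"
    define s where "s i x = indicator S x *\<^sub>R ((u x powr X i - u x powr t) / (X i - t) * ln (u x) ^ k)" for i x
    define f where "f x = indicator S x *\<^sub>R (u x powr t * ln (u x) ^ Suc k)" for x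
    define w where "w x = indicator S x * (C * u x)" for x
    have Xg: "1 < X i" "X i \<noteq> t" "1 + d < X i" for i using XT d0 by (auto simp: T_def) (smt (verit) XT T_def greaterThan_iff DiffE)
    have lim: "(\<lambda>i. integral\<^sup>L lborel (s i)) \<longlonglongrightarrow> integral\<^sup>L lborel f"
    proof (rule integral_dominated_convergence[where w=w])
      show "f \<in> borel_measurable lborel" unfolding f_def by measurable
      show "s i \<in> borel_measurable lborel" for i unfolding s_def by measurable
      show "integrable lborel w"
      proof -
        have "integrable lborel (\<lambda>x. C * (indicator S x * u x))"
          using uint unfolding set_integrable_def by (intro integrable_mult_right) simp
        then show ?thesis unfolding w_def by (simp add: mult_ac)
      qed
      show "AE x in lborel. (\<lambda>i. s i x) \<longlonglongrightarrow> f x"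
      proof (rule AE_I2)
        fix x show "(\<lambda>i. s i x) \<longlonglongrightarrow> f x"
        proof (cases "x \<in> S")
          case True
          then have "0 < u x" using upos by auto
          from pointwise_deriv[OF this, of k t]
          have "((\<lambda>y. (u x powr y * ln (u x) ^ k - u x powr t * ln (u x) ^ k) / (y - t))
                   \<longlongrightarrow> u x powr t * ln (u x) ^ Suc k) (at t within UNIV)"
            unfolding has_field_derivative_iff by simp
          then have "(\<lambda>i. (u x powr X i * ln (u x) ^ k - u x powr t * ln (u x) ^ k) / (X i - t))
                   \<longlonglongrightarrow> u x powr t * ln (u x) ^ Suc k"
            unfolding tendsto_at_iff_sequentially o_def using XT Xt by auto
          then show ?thesis using True unfolding s_def f_def by (simp add: algebra_simps)
        next
          case False
          then show ?thesis by (simp add: s_def f_def)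
        qed
      qed
      show "AE x in lborel. norm (s i x) \<le> w x" for i
      proof (rule AE_I2)
        fix x show "norm (s i x) \<le> w x"
        proof (cases "x \<in> S")
          case True
          then have u0: "0 < u x" "u x \<le> 1" using upos[of x] by auto
          define m where "m = min (X i) t"
          have m: "1 + d \<le> m" using Xg[of i] assms by (auto simp: m_def d_def field_simps)
          have "\<bar>(u x powr X i - u x powr t) / (X i - t) * ln (u x) ^ k\<bar>
                 = \<bar>u x powr X i - u x powr t\<bar> / \<bar>X i - t\<bar> * \<bar>ln (u x)\<bar> ^ k"
            by (simp add: abs_mult power_abs)
          also have "\<dots> \<le> (\<bar>X i - t\<bar> * \<bar>ln (u x)\<bar> * u x powr m) / \<bar>X i - t\<bar> * \<bar>ln (u x)\<bar> ^ k"
            unfolding m_def using u0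
            by (intro mult_right_mono divide_right_mono powr_diff_bound) auto
          also have "\<dots> = \<bar>u x powr m * ln (u x) ^ Suc k\<bar>"
            using Xg[of i] by (simp add: abs_mult power_abs)
          also have "\<dots> \<le> C * u x"
            unfolding C_def using u0 m d0 by (intro integrand_bound) auto
          finally show ?thesis using True by (simp add: s_def w_def)
        next
          case False
          then show ?thesis by (simp add: s_def w_def)
        qed
      qed
    qed
    have "integral\<^sup>L lborel (s i) = (HH S u k (X i) - HH S u k t) / (X i - t)" for i
    proof -
      have i1: "integrable lborel (\<lambda>x. indicator S x *\<^sub>R (u x powr X i * ln (u x) ^ k))"
        using integrable_pow[OF Xg(1)] unfolding set_integrable_def .
      have i2: "integrable lborel (\<lambda>x. indicator S x *\<^sub>R (u x powr t * ln (u x) ^ k))"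
        using integrable_pow[OF assms] unfolding set_integrable_def .
      have "s i = (\<lambda>x. (indicator S x *\<^sub>R (u x powr X i * ln (u x) ^ k)
                      - indicator S x *\<^sub>R (u x powr t * ln (u x) ^ k)) / (X i - t))"
        by (auto simp: s_def fun_eq_iff field_simps)
      then have "integral\<^sup>L lborel (s i) = (integral\<^sup>L lborel (\<lambda>x. indicator S x *\<^sub>R (u x powr X i * ln (u x) ^ k))
                      - integral\<^sup>L lborel (\<lambda>x. indicator S x *\<^sub>R (u x powr t * ln (u x) ^ k))) / (X i - t)"
        using i1 i2 by (simp add: integral_diff)
      then show ?thesis by (simp add: HH_def set_lebesgue_integral_def)
    qed
    moreover have "integral\<^sup>L lborel f = HH S u (Suc k) t"
      unfolding f_def by (simp add: HH_def set_lebesgue_integral_def)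
    ultimately show "((\<lambda>y. (HH S u k y - HH S u k t) / (y - t)) \<circ> X) \<longlonglongrightarrow> HH S u (Suc k) t"
      using lim by (simp add: o_def)
  qed
  then show ?thesis using tT at_within_open by metis
qed

lemma HH_derivs:
  assumes "1 < t"
  shows "(deriv ^^ k) (HH S u 0) t = HH S u k t"
  using assms
proof (induction k arbitrary: t)
  case 0
  then show ?case by simp
next
  case (Suc k)
  have "((deriv ^^ k) (HH S u 0) has_real_derivative HH S u (Suc k) t) (at t)"
    by (rule has_field_derivative_transform_within_open[OF HH_deriv[OF Suc.prems], of "{1<..}"])
       (use Suc in auto)
  then show ?case by (simp add: DERIV_imp_deriv)
qed

end

lemma gamma_inner:
  fixes v a :: real assumes v: "0 < v" "v < 1" and a: "0 < a"
  shows "(\<integral>\<^sup>+t. ennreal (indicator {1<..} t * (v powr t * (- ln v) ^ n / (t - 1) powr (1 - a))) \<partial>lborel)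
         = ennreal (Gamma a * v * (- ln v) powr (real n - a))"
proof -
  define L where "L = - ln v"
  have L0: "0 < L" using v by (simp add: L_def)
  define Q where "Q t = ennreal (indicator {1<..} t * (v powr t * L ^ n / (t - 1) powr (1 - a)))" for t
  define K where "K = v * L ^ n * L powr (1 - a)"
  have K0: "0 \<le> K" using v L0 by (simp add: K_def)
  have Qm: "Q \<in> borel_measurable borel" unfolding Q_def by measurable
  have eq: "Q (1 + (1 / L) * s) = ennreal K * ennreal (indicator {0..} s * s powr (a - 1) / exp s)" for s
  proof (cases "0 < s")
    case True
    have lnv: "ln v < 0" using v by simp
    have "v powr (1 + s / L) = exp (ln v - s)"
      using v lnv unfolding powr_def L_def by (simp add: field_simps)
    also have "\<dots> = v * exp (- s)" using v by (simp add: exp_diff exp_minus field_simps)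
    finally have "v powr (1 + s / L) = v * exp (- s)" .
    moreover have "1 / (s / L) powr (1 - a) = L powr (1 - a) * s powr (a - 1)"
    proof -
      have "(s / L) powr (1 - a) = s powr (1 - a) / L powr (1 - a)"
        using True L0 by (simp add: powr_divide)
      moreover have "s powr (a - 1) = 1 / s powr (1 - a)"
        using True by (simp add: powr_minus_divide[symmetric] powr_minus[symmetric])
      ultimately show ?thesis by simp
    qed
    moreover have "1 + 1 / L * s - 1 = s / L" by simp
    ultimately have "indicator {1<..} (1 + 1 / L * s) * (v powr (1 + 1 / L * s) * L ^ n / (1 + 1 / L * s - 1) powr (1 - a))
        = K * (indicator {0..} s * s powr (a - 1) / exp s)"
      using True L0 unfolding K_def
      by (simp add: exp_minus divide_inverse[symmetric]) (simp add: divide_inverse mult_ac)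
    then show ?thesis
      using K0 unfolding Q_def by (simp add: ennreal_mult[symmetric])
  next
    case False
    then have "\<not> 1 < 1 + s / L" using L0 by (simp add: field_simps)
    moreover have "indicator {0..} s * s powr (a - 1) = (0::real)"
      using False by (cases "s = 0") auto
    ultimately show ?thesis unfolding Q_def by simp
  qed
  have "(\<integral>\<^sup>+t. Q t \<partial>lborel) = ennreal \<bar>1 / L\<bar> * (\<integral>\<^sup>+s. Q (1 + (1 / L) * s) \<partial>lborel)"
    using L0 by (intro nn_integral_real_affine[OF Qm]) auto
  also have "\<dots> = ennreal (1 / L) * (ennreal K * (\<integral>\<^sup>+s. ennreal (indicator {0..} s * s powr (a - 1) / exp s) \<partial>lborel))"
  proof -
    have "(\<integral>\<^sup>+s. Q (1 + (1 / L) * s) \<partial>lborel) = (\<integral>\<^sup>+s. ennreal K * ennreal (indicator {0..} s * s powr (a - 1) / exp s) \<partial>lborel)"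
      by (rule nn_integral_cong) (rule eq)
    also have "\<dots> = ennreal K * (\<integral>\<^sup>+s. ennreal (indicator {0..} s * s powr (a - 1) / exp s) \<partial>lborel)"
      by (rule nn_integral_cmult) measurable
    finally show ?thesis using L0 by simp
  qed
  also have "\<dots> = ennreal (1 / L) * (ennreal K * ennreal (Gamma a))"
    using a by (simp add: Gamma_conv_nn_integral_real)
  also have "\<dots> = ennreal (Gamma a * v * L powr (real n - a))"
  proof -
    have "1 / L * (K * Gamma a) = Gamma a * v * L powr (real n - a)"
      using L0 unfolding K_def
      by (simp add: powr_realpow[symmetric] powr_add[symmetric] powr_diff field_simps)
    moreover have "ennreal (1 / L) * (ennreal K * ennreal (Gamma a)) = ennreal (1 / L * (K * Gamma a))"
    proof -
      have g: "0 \<le> Gamma a" using Gamma_real_pos[OF a] by simp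
      have "ennreal (1 / L * (K * Gamma a)) = ennreal (1 / L) * ennreal (K * Gamma a)"
        by (rule ennreal_mult) (use L0 K0 g in auto)
      also have "ennreal (K * Gamma a) = ennreal K * ennreal (Gamma a)"
        by (rule ennreal_mult) (use K0 g in auto)
      finally show ?thesis by simp
    qed
    ultimately show ?thesis by simp
  qed
  finally show ?thesis unfolding Q_def L_def .
qed


context
  fixes S :: "real set" and u :: "real \<Rightarrow> real"
  assumes S[measurable]: "S \<in> sets lborel"
    and u[measurable]: "u \<in> borel_measurable lborel"
    and upos: "\<And>x. x \<in> S \<Longrightarrow> 0 < u x \<and> u x < 1"
    and uint: "set_integrable lborel S u"
begin

lemma t1: "(\<lambda>(t, x). indicator S x * (u x powr t * (- ln (u x)) ^ n)) \<in> borel_measurable (lborel \<Otimes>\<^sub>M lborel)"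
  by measurable

lemma t2: "0 \<le> indicator S x * (u x powr t * (- ln (u x)) ^ n)"
  using upos[of x] by (auto simp: indicator_def)

lemma t3: assumes "1 < t" shows "integrable lborel (\<lambda>x. indicator S x * (u x powr t * (- ln (u x)) ^ n))"
proof -
  have "set_integrable lborel S (\<lambda>x. u x powr t * ln (u x) ^ n)"
    by (rule integrable_pow[OF S u upos uint assms])
  then have "set_integrable lborel S (\<lambda>x. (-1) ^ n * (u x powr t * ln (u x) ^ n))"
    by (rule set_integrable_mult_right)
  moreover have "(\<lambda>x. (-1) ^ n * (u x powr t * ln (u x) ^ n)) = (\<lambda>x. u x powr t * (- ln (u x)) ^ n)"
    by (rule ext, subst power_minus, rule mult.left_commute)
  ultimately have "set_integrable lborel S (\<lambda>x. u x powr t * (- ln (u x)) ^ n)" by simp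
  then show ?thesis unfolding set_integrable_def by simp
qed

end

context
  fixes S :: "real set" and u :: "real \<Rightarrow> real"
  assumes S[measurable]: "S \<in> sets lborel"
    and u[measurable]: "u \<in> borel_measurable lborel"
    and upos: "\<And>x. x \<in> S \<Longrightarrow> 0 < u x \<and> u x < 1"
    and uint: "set_integrable lborel S u"
begin

lemma core_swap:
  fixes \<nu> :: real
  assumes a0: "0 < real n - \<nu>"
  shows "integral\<^sup>L lborel (\<lambda>t. indicator {1<..} t *
            (integral\<^sup>L lborel (\<lambda>x. indicator S x * (u x powr t * (- ln (u x)) ^ n)) / (t - 1) powr (\<nu> + 1 - real n)))
       = Gamma (real n - \<nu>) * integral\<^sup>L lborel (\<lambda>x. indicator S x * (u x * (- ln (u x)) powr \<nu>))"
proof -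
  define a where "a = real n - \<nu>"
  have a: "0 < a" using a0 by (simp add: a_def)
  have nu1: "\<nu> + 1 - real n = 1 - a" by (simp add: a_def)
  define I1 where "I1 t x = indicator S x * (u x powr t * (- ln (u x)) ^ n)" for t x
  define J where "J t x = indicator {1<..} t * I1 t x / (t - 1) powr (1 - a)" for t x
  have I1m[measurable]: "(\<lambda>(t, x). I1 t x) \<in> borel_measurable (lborel \<Otimes>\<^sub>M lborel)"
    unfolding I1_def by measurable
  have Jm[measurable]: "(\<lambda>(x, t). J t x) \<in> borel_measurable (lborel \<Otimes>\<^sub>M lborel)"
    unfolding J_def I1_def by measurable
  have I1nn: "0 \<le> I1 t x" for t x
    using upos[of x] by (auto simp: I1_def indicator_def)
  have Jnn: "0 \<le> J t x" for t x
    using I1nn[of t x] by (auto simp: J_def indicator_def)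
  have intI1: "integrable lborel (I1 t)" if "1 < t" for t
    unfolding I1_def by (rule t3[OF S u upos uint that])
  have intJ: "integrable lborel (J t)" for t
  proof (cases "1 < t")
    case True
    then show ?thesis unfolding J_def using intI1[OF True] by simp
  next
    case False
    then show ?thesis unfolding J_def by simp
  qed
  have intJ_eq: "integral\<^sup>L lborel (J t) = indicator {1<..} t * (integral\<^sup>L lborel (I1 t) / (t - 1) powr (1 - a))" for t
    unfolding J_def by simp
  define P where "P t = integral\<^sup>L lborel (I1 t)" for t
  have Pm[measurable]: "P \<in> borel_measurable lborel"
    unfolding P_def by measurable
  have Pnn: "0 \<le> P t" for t unfolding P_def by (intro integral_nonneg_AE AE_I2 I1nn)
  have "integral\<^sup>L lborel (\<lambda>t. indicator {1<..} t * (P t / (t - 1) powr (1 - a)))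
        = enn2real (\<integral>\<^sup>+t. ennreal (indicator {1<..} t * (P t / (t - 1) powr (1 - a))) \<partial>lborel)"
    by (rule integral_eq_nn_integral) (auto intro!: AE_I2 mult_nonneg_nonneg divide_nonneg_nonneg Pnn)
  also have "(\<integral>\<^sup>+t. ennreal (indicator {1<..} t * (P t / (t - 1) powr (1 - a))) \<partial>lborel)
           = (\<integral>\<^sup>+t. (\<integral>\<^sup>+x. ennreal (J t x) \<partial>lborel) \<partial>lborel)"
  proof (rule nn_integral_cong)
    fix t
    have "(\<integral>\<^sup>+x. ennreal (J t x) \<partial>lborel) = ennreal (integral\<^sup>L lborel (J t))"
      by (rule nn_integral_eq_integral[OF intJ]) (simp add: Jnn)
    then show "ennreal (indicator {1<..} t * (P t / (t - 1) powr (1 - a))) = (\<integral>\<^sup>+x. ennreal (J t x) \<partial>lborel)"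
      by (simp add: intJ_eq P_def)
  qed
  also have "\<dots> = (\<integral>\<^sup>+x. (\<integral>\<^sup>+t. ennreal (J t x) \<partial>lborel) \<partial>lborel)"
    by (rule lborel_pair.Fubini'[where f="\<lambda>x t. ennreal (J t x)"]) measurable
  also have "\<dots> = (\<integral>\<^sup>+x. ennreal (indicator S x * (Gamma a * (u x * (- ln (u x)) powr \<nu>))) \<partial>lborel)"
  proof (rule nn_integral_cong)
    fix x show "(\<integral>\<^sup>+t. ennreal (J t x) \<partial>lborel) = ennreal (indicator S x * (Gamma a * (u x * (- ln (u x)) powr \<nu>)))"
    proof (cases "x \<in> S")
      case True
      have "(\<integral>\<^sup>+t. ennreal (J t x) \<partial>lborel) =
            (\<integral>\<^sup>+t. ennreal (indicator {1<..} t * (u x powr t * (- ln (u x)) ^ n / (t - 1) powr (1 - a))) \<partial>lborel)"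
        using True by (intro nn_integral_cong) (simp add: J_def I1_def)
      also have "\<dots> = ennreal (Gamma a * u x * (- ln (u x)) powr (real n - a))"
        using upos[OF True] a by (intro gamma_inner) auto
      finally show ?thesis using True by (simp add: a_def mult_ac)
    next
      case False
      then show ?thesis by (simp add: J_def I1_def)
    qed
  qed
  also have "enn2real \<dots> = integral\<^sup>L lborel (\<lambda>x. indicator S x * (Gamma a * (u x * (- ln (u x)) powr \<nu>)))"
    by (rule integral_eq_nn_integral[symmetric])
       (use upos Gamma_real_pos[OF a] in \<open>auto intro!: AE_I2 mult_nonneg_nonneg simp: indicator_def less_imp_le\<close>)
  also have "\<dots> = Gamma a * integral\<^sup>L lborel (\<lambda>x. indicator S x * (u x * (- ln (u x)) powr \<nu>))"
    by (simp add: mult_ac)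
  finally show ?thesis unfolding nu1 P_def I1_def a_def .
qed

lemma neg1_sq: "(-1::real) ^ n * (-1) ^ n = 1"
  by (simp add: power_mult_distrib[symmetric])

lemma core_main:
  fixes \<nu> :: real
  assumes a0: "0 < real n - \<nu>"
  shows "(LBINT x:S. u x * (- ln (u x)) powr \<nu>) = (-1) ^ n / Gamma (real n - \<nu>) *
           (LBINT t = ereal 1..PInfty. (deriv ^^ n) (HH S u 0) t / (t - 1) powr (\<nu> + 1 - real n))"
proof -
  define P where "P t = integral\<^sup>L lborel (\<lambda>x. indicator S x * (u x powr t * (- ln (u x)) ^ n))" for t
  define D where "D t = (t - 1) powr (\<nu> + 1 - real n)" for t
  have HHn: "HH S u n t = (-1) ^ n * P t" for t
  proof -
    have "(\<lambda>x. indicator S x * (u x powr t * ln (u x) ^ n))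
          = (\<lambda>x. (-1) ^ n * (indicator S x * (u x powr t * (- ln (u x)) ^ n)))"
    proof (rule ext)
      fix x
      have "(- ln (u x)) ^ n = (-1) ^ n * ln (u x) ^ n" by (rule power_minus)
      then have "(-1) ^ n * (- ln (u x)) ^ n = ln (u x) ^ n"
        by (simp add: mult.assoc[symmetric] neg1_sq)
      then show "indicator S x * (u x powr t * ln (u x) ^ n)
          = (-1) ^ n * (indicator S x * (u x powr t * (- ln (u x)) ^ n))"
        by (metis mult.left_commute)
    qed
    then show ?thesis unfolding HH_def set_lebesgue_integral_def P_def by simp
  qed
  have "(LBINT t = ereal 1..PInfty. (deriv ^^ n) (HH S u 0) t / D t)
        = (LBINT t:{1<..}. (deriv ^^ n) (HH S u 0) t / D t)"
    by (simp add: interval_lebesgue_integral_def)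
  also have "\<dots> = (LBINT t:{1<..}. (-1) ^ n * (P t / D t))"
    by (rule set_lebesgue_integral_cong) (auto simp: HH_derivs[OF S u upos uint] HHn)
  also have "\<dots> = (-1) ^ n * (LBINT t:{1<..}. P t / D t)"
    by (rule set_integral_mult_right)
  also have "(LBINT t:{1<..}. P t / D t) = integral\<^sup>L lborel (\<lambda>t. indicator {1<..} t * (P t / D t))"
    by (simp add: set_lebesgue_integral_def)
  also have "\<dots> = Gamma (real n - \<nu>) * integral\<^sup>L lborel (\<lambda>x. indicator S x * (u x * (- ln (u x)) powr \<nu>))"
    unfolding P_def D_def by (rule core_swap[OF a0])
  also have "integral\<^sup>L lborel (\<lambda>x. indicator S x * (u x * (- ln (u x)) powr \<nu>)) = (LBINT x:S. u x * (- ln (u x)) powr \<nu>)"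
    by (simp add: set_lebesgue_integral_def)
  finally have eq: "(LBINT t = ereal 1..PInfty. (deriv ^^ n) (HH S u 0) t / D t)
      = (-1) ^ n * (Gamma (real n - \<nu>) * (LBINT x:S. u x * (- ln (u x)) powr \<nu>))" .
  have G: "Gamma (real n - \<nu>) \<noteq> 0" using Gamma_real_pos[OF a0] by simp
  show ?thesis unfolding D_def[symmetric] eq
    using G by (simp add: mult.assoc[symmetric] neg1_sq)
qed

end

lemma endpoints:
  fixes F :: "real \<Rightarrow> real"
  assumes mono: "mono F" and F01: "\<And>x. 0 \<le> F x \<and> F x \<le> 1"
  shows "lend F \<le> rend F"
    and "\<And>x. x \<in> einterval (lend F) (rend F) \<Longrightarrow> 0 < F x \<and> F x < 1"
proof -
  show "lend F \<le> rend F"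
  proof (rule ccontr)
    assume "\<not> lend F \<le> rend F"
    then have "rend F < lend F" by (simp add: not_le)
    then obtain z where z: "rend F < ereal z" "ereal z < lend F"
      using ereal_dense2 by metis
    have "\<not> F z > 0"
    proof
      assume "F z > 0"
      then have "ereal z \<in> {ereal x | x. F x > 0}" by auto
      then have "lend F \<le> ereal z" unfolding lend_def by (rule Inf_lower)
      then show False using z(2) by simp
    qed
    then have "1 - F z > 0" using F01[of z] by simp
    then have "ereal z \<in> {ereal x | x. 1 - F x > 0}" by auto
    then have "ereal z \<le> rend F" unfolding rend_def by (rule Sup_upper)
    then show False using z(1) by simp
  qed
  fix x assume "x \<in> einterval (lend F) (rend F)"
  then have lx: "lend F < ereal x" and xr: "ereal x < rend F" by (auto simp: einterval_iff)
  from lx obtain y where y: "F y > 0" "ereal y < ereal x"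
    unfolding lend_def Inf_less_iff by blast
  from xr obtain w where w: "1 - F w > 0" "ereal x < ereal w"
    unfolding rend_def less_Sup_iff by blast
  have "y \<le> x" "x \<le> w" using y(2) w(2) by auto
  then have "F y \<le> F x" "F x \<le> F w" by (auto intro: monoD[OF mono])
  then show "0 < F x \<and> F x < 1" using y w by auto
qed

lemma caputo_core:
  fixes F :: "real \<Rightarrow> real" and u :: "real \<Rightarrow> real" and \<nu> :: real
  assumes "\<nu> > 0"
    and S: "S \<in> sets lborel"
    and um: "u \<in> borel_measurable lborel"
    and upos: "\<And>x. x \<in> S \<Longrightarrow> 0 < u x \<and> u x < 1"
    and uint: "set_integrable lborel S u"
    and g: "\<And>t. g t = HH S u 0 t"
  shows "(LBINT x:S. u x * (- ln (u x)) powr \<nu>) = caputo_minus \<nu> g 1"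
proof -
  define n where "n = nat \<lfloor>\<nu>\<rfloor> + 1"
  have "real (nat \<lfloor>\<nu>\<rfloor>) = of_int \<lfloor>\<nu>\<rfloor>" using assms(1) by simp
  then have a0: "0 < real n - \<nu>" unfolding n_def by linarith
  have gg: "g = HH S u 0" using g by (simp add: fun_eq_iff)
  show ?thesis
    unfolding caputo_minus_def Let_def n_def[symmetric] gg
    by (rule core_main[OF S um upos uint a0])
qed

theorem proposition3:
  fixes M :: "'a measure" and X :: "'a \<Rightarrow> real" and \<nu> :: real
  assumes "prob_space M"
    and "X \<in> borel_measurable M"
    and "\<nu> > 0" and "\<nu> \<notin> \<nat>"
  defines "F \<equiv> cdf (distr M borel X)"
  shows "((0, 1) \<in> CIGF_dom F \<longrightarrow>
            CRE_frac F \<nu> = 1 / Gamma (\<nu> + 1) * caputo_minus_x2 \<nu> (CIGF F) 0 1)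
       \<and> ((1, 0) \<in> CIGF_dom F \<longrightarrow>
            CE_frac F \<nu> = 1 / Gamma (\<nu> + 1) * caputo_minus_x1 \<nu> (CIGF F) 1 0)"
proof -
  interpret prob_space M by fact
  interpret rd: real_distribution "distr M borel X"
    using assms(2) by (intro real_distribution_distr) simp
  have mono: "mono F" unfolding F_def by (rule monoI) (rule rd.cdf_nondecreasing)
  have F01: "0 \<le> F x \<and> F x \<le> 1" for x unfolding F_def
    using rd.cdf_nonneg rd.cdf_bounded_prob by auto
  have Fm[measurable]: "F \<in> borel_measurable lborel"
    using borel_measurable_mono[OF mono] by simp
  note lr = endpoints[OF mono F01]
  define S where "S = einterval (lend F) (rend F)"
  have S[measurable]: "S \<in> sets lborel" unfolding S_def by simp
  have Spos: "0 < F x \<and> F x < 1" if "x \<in> S" for x using lr(2) that unfolding S_def by blast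
  have ival: "(LBINT x = lend F..rend F. f x) = (LBINT x:S. f x)" for f
    using lr(1) unfolding S_def interval_lebesgue_integral_def by simp
  have ivalint: "interval_lebesgue_integrable lborel (lend F) (rend F) f = set_integrable lborel S f" for f
    using lr(1) unfolding S_def interval_lebesgue_integrable_def by simp
  show ?thesis
  proof (intro conjI impI)
    assume "(0, 1) \<in> CIGF_dom F"
    then have "set_integrable lborel S (cigf_integrand F 0 1)"
      unfolding CIGF_dom_def ivalint by simp
    then have uint: "set_integrable lborel S (\<lambda>x. 1 - F x)"
      by (rule set_integrable_cong[THEN iffD1, rotated -1])
         (auto simp: cigf_integrand_def dest!: Spos)
    have upos: "0 < 1 - F x \<and> 1 - F x < 1" if "x \<in> S" for x using Spos[OF that] by auto
    have g: "CIGF F 0 t = HH S (\<lambda>x. 1 - F x) 0 t" for t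
      unfolding CIGF_def ival HH_def
      by (rule set_lebesgue_integral_cong[OF S]) (auto simp: cigf_integrand_def dest!: Spos)
    have "(LBINT x:S. (1 - F x) * (- ln (1 - F x)) powr \<nu>) = caputo_minus \<nu> (\<lambda>t. CIGF F 0 t) 1"
      by (rule caputo_core[OF assms(3) S _ upos uint g]) measurable
    then show "CRE_frac F \<nu> = 1 / Gamma (\<nu> + 1) * caputo_minus_x2 \<nu> (CIGF F) 0 1"
      unfolding CRE_frac_def caputo_minus_x2_def ival by simp
  next
    assume "(1, 0) \<in> CIGF_dom F"
    then have "set_integrable lborel S (cigf_integrand F 1 0)"
      unfolding CIGF_dom_def ivalint by simp
    then have uint: "set_integrable lborel S F"
      by (rule set_integrable_cong[THEN iffD1, rotated -1])
         (auto simp: cigf_integrand_def dest!: Spos)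
    have g: "CIGF F t 0 = HH S F 0 t" for t
      unfolding CIGF_def ival HH_def
      by (rule set_lebesgue_integral_cong[OF S]) (auto simp: cigf_integrand_def dest!: Spos)
    have "(LBINT x:S. F x * (- ln (F x)) powr \<nu>) = caputo_minus \<nu> (\<lambda>t. CIGF F t 0) 1"
      by (rule caputo_core[OF assms(3) S Fm Spos uint g])
    then show "CE_frac F \<nu> = 1 / Gamma (\<nu> + 1) * caputo_minus_x1 \<nu> (CIGF F) 1 0"
      unfolding CE_frac_def caputo_minus_x1_def ival by simp
  qed
qed

end
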